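(* Let $t\ge0$, $h\ge0$ and $i$ be integers with $-t\le i\le h$. Let $\Phi(z)=\sum_{n\ge0}c_nz^n$, where $c_n$ is the number of Deutsch paths of $n$ steps from $(0,0)$ to $(n,i)$ that stay within levels $-t,\dots,h$ throughout. Let $v=v(z)$ be the power series with $v(0)=0$ satisfying $z=\frac{v}{1+v+v^2}$. Then $$\Phi(z)=\frac{(1+v)^{-i-2}(1-v^{i+t+1})\,v\,(1-v^{h+1})(1+v+v^2)}{(1-v)(1-v^{h+t+3})}\quad\text{for } i<0,$$ $$\Phi(z)=\frac{v^{i}(1-v^{t+2})(1-v^{2-i+h})(1+v+v^2)}{(1-v)(1+v)^{i+2}(1-v^{h+t+3})}\quad\text{for } i\ge0.$$
   Context: A Deutsch path is a lattice path whose steps are up-steps $(1,1)$ and down-steps $(1,-k)$ for any integer $k\ge1$. The series $v$ is given explicitly by $v=\frac{1-z-\sqrt{1-2z-3z^2}}{2z}$. *)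

theory Defs
  imports "HOL-Computational_Algebra.Formal_Power_Series"
begin

text \<open>A Deutsch path with n steps is encoded by its list of vertical increments:
  each step is either an up-step (+1) or a down-step (-k) with k \<ge> 1.
  The path starts at level 0; its levels are the partial sums of the increments.\<close>

definition deutsch_step :: "int \<Rightarrow> bool" where
  "deutsch_step s \<longleftrightarrow> s = 1 \<or> s \<le> -1"

definition bounded_deutsch_paths :: "nat \<Rightarrow> nat \<Rightarrow> int \<Rightarrow> nat \<Rightarrow> int list set" where
  "bounded_deutsch_paths t h i n =
     {ss. length ss = n \<and> (\<forall>s\<in>set ss. deutsch_step s) \<and>
          (\<forall>k\<le>n. - int t \<le> sum_list (take k ss) \<and> sum_list (take k ss) \<le> int h) \<and>
          sum_list ss = i}"

definition fps_power_int :: "'a::field fps \<Rightarrow> int \<Rightarrow> 'a fps" where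
  "fps_power_int a k = (if k \<ge> 0 then a ^ nat k else inverse a ^ nat (- k))"

end

theory Submission
  imports Defs "HOL-Computational_Algebra.Formal_Laurent_Series"
begin

lemma idE0:
  fixes V P R y q W m :: "'a::field"
  assumes yd: "y = 1+V" and qd: "q = 1+V+V^2" and Wd: "W = 1 - V^3*P*R" and md: "m = 1-V"
    and nz: "V \<noteq> 0" "y \<noteq> 0" "q \<noteq> 0" "m \<noteq> 0" "W \<noteq> 0"
  shows "(y^2/q) * ((1-V^2*P)*q/(y^2*m*W)) * (1-V^2*R)
       - (y^2/q) * ((1-V^2*P)*q/(y^2*m*W)) * ((V-V^2*R)/y)
       - (V/q) * (V*(1-V*R)*q/(y^2*m*W)) * (y*(1-P)) = 1"
proof -
  have t1: "(y^2/q) * ((1-V^2*P)*q/(y^2*m*W)) * (1-V^2*R) = (y*((1-V^2*P)*(1-V^2*R)))/(y*m*W)"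
    using nz by (simp add: field_simps)
  have t2: "(y^2/q) * ((1-V^2*P)*q/(y^2*m*W)) * ((V-V^2*R)/y) = ((1-V^2*P)*(V-V^2*R))/(y*m*W)"
    using nz by (simp add: field_simps)
  have t3: "(V/q) * (V*(1-V*R)*q/(y^2*m*W)) * (y*(1-P)) = (V*V*(1-V*R)*(1-P))/(y*m*W)"
    using nz by (simp add: field_simps power2_eq_square)
  have n: "y*((1-V^2*P)*(1-V^2*R)) - (1-V^2*P)*(V-V^2*R) - V*V*(1-V*R)*(1-P) = y*m*W"
    unfolding yd md Wd by (simp add: algebra_simps power2_eq_square power3_eq_cube)
  have "y*m*W/(y*m*W) = 1" using nz by simp
  then show ?thesis unfolding t1 t2 t3 n[symmetric] diff_divide_distrib[symmetric] .
qed

lemma idEm1: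
  fixes V P R y q W m :: "'a::field"
  assumes yd: "y = 1+V" and qd: "q = 1+V+V^2" and Wd: "W = 1 - V^3*P*R" and md: "m = 1-V"
    and nz: "V \<noteq> 0" "y \<noteq> 0" "q \<noteq> 0" "m \<noteq> 0" "W \<noteq> 0"
  shows "(y^2/q) * (V*(1-V*R)*q/(y^2*m*W)) * (y*(1-P))
       - (y^2/q) * ((1-V^2*P)*q/(y^2*m*W)) * (1-V^2*R)
       - (V/q) * (V*(1-V*R)*q/(y^2*m*W)) * (y^2*(V-P)/V) = -1"
proof -
  have t1: "(y^2/q) * (V*(1-V*R)*q/(y^2*m*W)) * (y*(1-P)) = (y*y*V*(1-V*R)*(1-P))/(y*m*W)"
    using nz by (simp add: field_simps)
  have t2: "(y^2/q) * ((1-V^2*P)*q/(y^2*m*W)) * (1-V^2*R) = (y*((1-V^2*P)*(1-V^2*R)))/(y*m*W)"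
    using nz by (simp add: field_simps)
  have t3: "(V/q) * (V*(1-V*R)*q/(y^2*m*W)) * (y^2*(V-P)/V) = (y*V*(1-V*R)*(V-P))/(y*m*W)"
    using nz by (simp add: field_simps power2_eq_square)
  have n: "y*y*V*(1-V*R)*(1-P) - y*((1-V^2*P)*(1-V^2*R)) - y*V*(1-V*R)*(V-P) = -(y*m*W)"
    unfolding yd md Wd by (simp add: algebra_simps power2_eq_square power3_eq_cube)
  have "-(y*m*W)/(y*m*W) = -1" using nz by simp
  then show ?thesis unfolding t1 t2 t3 n[symmetric] diff_divide_distrib[symmetric] .
qed

lemma idTop0:
  fixes V P y q W m :: "'a::field"
  assumes yd: "y = 1+V" and qd: "q = 1+V+V^2" and Wd: "W = 1 - V^3*P" and md: "m = 1-V"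
    and nz: "V \<noteq> 0" "y \<noteq> 0" "q \<noteq> 0" "m \<noteq> 0" "W \<noteq> 0"
  shows "((1-V^2*P)*q/(y^2*m*W)) * (1-V^2) = 1 + (V/q) * (V*(1-V)*q/(y^2*m*W)) * (y*(1-P))"
proof -
  have t1: "((1-V^2*P)*q/(y^2*m*W)) * (1-V^2) = ((1-V^2*P)*q*(m*y))/(y*(m*y)*W)"
  proof -
    have h: "1 - V^2 = m*y" by (simp add: md yd algebra_simps power2_eq_square)
    show ?thesis unfolding h using nz by (simp add: field_simps power2_eq_square)
  qed
  also have "\<dots> = ((1-V^2*P)*q)/(y*W)" using nz by (simp add: md yd)
  finally have t1: "((1-V^2*P)*q/(y^2*m*W)) * (1-V^2) = ((1-V^2*P)*q)/(y*W)" .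
  have t3: "(V/q) * (V*(1-V)*q/(y^2*m*W)) * (y*(1-P)) = (V*V*(1-P))/(y*W)"
    using nz unfolding md[symmetric] by (simp add: field_simps power2_eq_square)
  have n: "(1-V^2*P)*q = y*W + V*V*(1-P)"
    unfolding yd qd Wd by (simp add: algebra_simps power2_eq_square power3_eq_cube)
  show ?thesis unfolding t1 t3 unfolding n using nz by (simp add: add_divide_distrib)
qed

lemma idTop:
  fixes V a Y y q :: "'a::field"
  assumes yd: "y = 1+V" and qd: "q = 1+V+V^2" and nz: "Y \<noteq> 0" "y \<noteq> 0" "q \<noteq> 0"
  shows "K * ((V*a - V^3*a)/(Y*y)) = (V/q) * (K * ((a - V^3*a)/Y))"
proof -
  have n: "q*(V*a - V^3*a) = y*(V*(a - V^3*a))"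
    unfolding yd qd by (simp add: algebra_simps power2_eq_square power3_eq_cube)
  have e: "V*a - V^3*a = y*(V*(a - V^3*a))/q" using nz n by (simp add: eq_divide_eq mult.commute)
  show ?thesis unfolding e using nz by (simp add: field_simps)
qed



definition xa :: "'a::field \<Rightarrow> 'a" where "xa V = V/(1+V)"
definition xb :: "'a::field \<Rightarrow> 'a" where "xb V = 1/(1+V)"
definition zz :: "'a::field \<Rightarrow> 'a" where "zz V = V/(1+V+V^2)"
definition Kn :: "'a::field \<Rightarrow> nat \<Rightarrow> nat \<Rightarrow> 'a" where
  "Kn V t h = V*(1-V^(h+1))*(1+V+V^2)/((1+V)^2*(1-V)*(1-V^(h+t+3)))"
definition Kp :: "'a::field \<Rightarrow> nat \<Rightarrow> nat \<Rightarrow> 'a" where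
  "Kp V t h = (1-V^(t+2))*(1+V+V^2)/((1+V)^2*(1-V)*(1-V^(h+t+3)))"
definition Hl :: "'a::field \<Rightarrow> nat \<Rightarrow> nat \<Rightarrow> int \<Rightarrow> 'a" where
  "Hl V t h j = (if j < 0 then Kn V t h * (xb V powi j - V^(t+1) * xa V powi j)
                 else Kp V t h * (xa V powi j - V^(h+2) * xb V powi j))"

locale vctx =
  fixes V :: "'a::field" and t h :: nat
  assumes V0: "V \<noteq> 0" and y0: "1+V \<noteq> 0" and m0: "1-V \<noteq> 0" and q0: "1+V+V^2 \<noteq> 0"
    and w0: "1 - V^(h+t+3) \<noteq> 0"
begin

lemma root: 
  assumes "x = xa V \<or> x = xb V"
  shows "(1+zz V)*x - (1+zz V)*x^2 - zz V = 0"
proof -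
  define q where "q = 1+V+V^2"
  have qn: "q \<noteq> 0" using q0 q_def by simp
  have zq: "zz V = V/q" by (simp add: zz_def q_def)
  have "1 + zz V = (q+V)/q" using qn by (simp add: zq field_simps)
  also have "q + V = (1+V)^2" by (simp add: q_def power2_eq_square algebra_simps)
  finally have z1: "1 + zz V = (1+V)^2/q" .
  have e: "(1+zz V)*x - (1+zz V)*x^2 - zz V = ((1+V)^2*x - (1+V)^2*x^2 - V)/q"
    using qn unfolding z1 by (simp add: zq diff_divide_distrib)
  have "(1+V)^2*x - (1+V)^2*x^2 - V = 0"
  proof -
  have a1: "(1+V)^2*x = (1+V)*((1+V)*x)" and a2: "(1+V)^2*x^2 = ((1+V)*x)^2"
    by (simp_all add: power2_eq_square algebra_simps)
  show ?thesis
  proof (cases "x = xa V")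
    case True
    have "(1+V)*x = V" using y0 by (simp add: True xa_def)
    then have "(1+V)^2*x - (1+V)^2*x^2 - V = (1+V)*V - V*V - V"
      unfolding a1 a2 by (simp add: power2_eq_square)
    then show ?thesis by (simp add: algebra_simps)
  next
    case False
    then have "x = xb V" using assms by blast
    then have "(1+V)*x = 1" using y0 by (simp add: xb_def)
    then have "(1+V)^2*x - (1+V)^2*x^2 - V = (1+V)*1 - 1*1 - V"
      unfolding a1 a2 by (simp add: power2_eq_square)
    then show ?thesis by (simp add: algebra_simps)
  qed
  qed
  then show ?thesis by (simp add: e)
qed

lemma xnz: "xa V \<noteq> 0" "xb V \<noteq> 0"
  using y0 V0 by (auto simp: xa_def xb_def)

lemma gen:
  assumes "x \<noteq> 0" "(1+zz V)*x - (1+zz V)*x^2 - zz V = 0"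
  shows "(1+zz V)*x powi j - (1+zz V)*x powi (j+1) - zz V * x powi (j-1) = 0"
proof -
  have "x powi (j+1) = x powi j * x" "x powi (j-1) = x powi j / x"
    using assms(1) by (simp_all add: power_int_add power_int_diff)
  then have "(1+zz V)*x powi j - (1+zz V)*x powi (j+1) - zz V * x powi (j-1)
     = (x powi j / x) * ((1+zz V)*x - (1+zz V)*x^2 - zz V)"
    using assms(1) by (simp add: field_simps power2_eq_square)
  then show ?thesis using assms(2) by simp
qed


lemma z1: "1 + zz V = (1+V)^2/(1+V+V^2)"
proof -
  define q where "q = 1+V+V^2"
  have qn: "q \<noteq> 0" using q0 q_def by simp
  have zq: "zz V = V/q" by (simp add: zz_def q_def)
  have "1 + zz V = (q+V)/q" using qn by (simp add: zq field_simps)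
  also have "q + V = (1+V)^2" by (simp add: q_def power2_eq_square algebra_simps)
  finally show ?thesis by (simp add: q_def)
qed

lemma W_eq: "1 - V^(h+t+3) = 1 - V^3*V^t*V^h"
  by (simp add: power_add mult_ac)

lemma Kn_eq: "Kn V t h = V*(1-V*V^h)*(1+V+V^2)/((1+V)^2*(1-V)*(1 - V^3*V^t*V^h))"
  unfolding Kn_def W_eq by simp
lemma Kp_eq: "Kp V t h = (1-V^2*V^t)*(1+V+V^2)/((1+V)^2*(1-V)*(1 - V^3*V^t*V^h))"
  unfolding Kp_def W_eq by (simp add: power_add mult_ac power2_eq_square)

lemma Hm1: "Hl V t h (-1) = Kn V t h * ((1+V)*(1-V^t))"
  using V0 y0 by (simp add: Hl_def xa_def xb_def power_int_minus field_simps)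
lemma Hm2: "Hl V t h (-2) = Kn V t h * ((1+V)^2*(V-V^t)/V)"
proof -
  have f1: "xb V powi (-2) = (1+V)^2" and f2: "xa V powi (-2) = (1+V)^2/V^2"
    using V0 y0 by (simp_all add: xa_def xb_def power_int_minus power_divide)
  have "xb V powi (-2) - V^(t+1) * xa V powi (-2) = (1+V)^2*(V-V^t)/V"
    unfolding f1 f2 using V0 by (simp add: field_simps power2_eq_square)
  then show ?thesis by (simp add: Hl_def)
qed
lemma H0: "Hl V t h 0 = Kp V t h * (1 - V^2*V^h)"
  by (simp add: Hl_def power_add mult_ac power2_eq_square)
lemma H1: "Hl V t h 1 = Kp V t h * ((V - V^2*V^h)/(1+V))"
  using y0 by (simp add: Hl_def xa_def xb_def power_add mult_ac diff_divide_distrib power2_eq_square)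
lemma Hbot: "Hl V t h (-int t - 1) = 0"
proof -
  have e: "-int t - 1 = - int (t+1)" by simp
  have "xb V powi (-int t - 1) = inverse (xb V ^ (t+1))" "xa V powi (-int t - 1) = inverse (xa V ^ (t+1))"
    unfolding e by (simp_all only: power_int_minus power_int_of_nat)
  then have "xb V powi (-int t - 1) = (1+V)^(t+1)" "xa V powi (-int t - 1) = ((1+V)/V)^(t+1)"
    using V0 y0 by (simp_all add: xa_def xb_def power_divide)
  moreover have "V^(t+1) * ((1+V)/V)^(t+1) = (1+V)^(t+1)"
    using V0 by (simp add: power_divide)
  ultimately show ?thesis by (simp add: Hl_def)
qed

definition "EE j = (1+zz V)*Hl V t h j - (1+zz V)*Hl V t h (j+1) - zz V * Hl V t h (j-1)"

lemma E_0: "EE 0 = 1"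
proof -
  have "EE 0 = ((1+V)^2/(1+V+V^2)) * ((1-V^2*V^t)*(1+V+V^2)/((1+V)^2*(1-V)*(1 - V^3*V^t*V^h))) * (1 - V^2*V^h)
     - ((1+V)^2/(1+V+V^2)) * ((1-V^2*V^t)*(1+V+V^2)/((1+V)^2*(1-V)*(1 - V^3*V^t*V^h))) * ((V - V^2*V^h)/(1+V))
     - (V/(1+V+V^2)) * (V*(1-V*V^h)*(1+V+V^2)/((1+V)^2*(1-V)*(1 - V^3*V^t*V^h))) * ((1+V)*(1-V^t))"
    unfolding EE_def z1 by (simp add: H0 H1 Hm1 Kn_eq Kp_eq zz_def)
  also have "\<dots> = 1"
    by (rule idE0) (use V0 y0 m0 q0 w0 W_eq in auto)
  finally show ?thesis .
qed

lemma E_m1: "EE (-1) = -1"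
proof -
  have "EE (-1) = ((1+V)^2/(1+V+V^2)) * (V*(1-V*V^h)*(1+V+V^2)/((1+V)^2*(1-V)*(1 - V^3*V^t*V^h))) * ((1+V)*(1-V^t))
     - ((1+V)^2/(1+V+V^2)) * ((1-V^2*V^t)*(1+V+V^2)/((1+V)^2*(1-V)*(1 - V^3*V^t*V^h))) * (1 - V^2*V^h)
     - (V/(1+V+V^2)) * (V*(1-V*V^h)*(1+V+V^2)/((1+V)^2*(1-V)*(1 - V^3*V^t*V^h))) * ((1+V)^2*(V-V^t)/V)"
    unfolding EE_def z1 by (simp add: H0 Hm2 Hm1 Kn_eq Kp_eq zz_def)
  also have "\<dots> = -1"
    by (rule idEm1) (use V0 y0 m0 q0 w0 W_eq in auto)
  finally show ?thesis .
qed

lemma top0: "h = 0 \<Longrightarrow> Hl V t h 0 = 1 + zz V * Hl V t h (-1)"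
proof -
  assume h: "h = 0"
  have "Hl V t h 0 = ((1-V^2*V^t)*(1+V+V^2)/((1+V)^2*(1-V)*(1 - V^3*V^t))) * (1-V^2)"
    unfolding H0 Kp_eq by (simp add: h)
  also have "\<dots> = 1 + (V/(1+V+V^2)) * (V*(1-V)*(1+V+V^2)/((1+V)^2*(1-V)*(1 - V^3*V^t))) * ((1+V)*(1-V^t))"
    by (rule idTop0) (use V0 y0 m0 q0 w0 W_eq h in auto)
  also have "\<dots> = 1 + zz V * Hl V t h (-1)"
    unfolding Hm1 Kn_eq by (simp add: h zz_def)
  finally show ?thesis .
qed

lemma top1: "h = Suc k \<Longrightarrow> Hl V t h (int h) = zz V * Hl V t h (int k)"
proof -
  assume h: "h = Suc k"
  have a: "Hl V t h (int h) = Kp V t h * ((V*V^k - V^3*V^k)/((1+V)^k*(1+V)))"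
    unfolding Hl_def power_int_of_nat
    using y0 by (simp add: h xa_def xb_def power_divide diff_divide_distrib power_add mult_ac power3_eq_cube)
  have b: "Hl V t h (int k) = Kp V t h * ((V^k - V^3*V^k)/((1+V)^k))"
    unfolding Hl_def power_int_of_nat
    using y0 by (simp add: h xa_def xb_def power_divide diff_divide_distrib power_add mult_ac power3_eq_cube)
  show ?thesis unfolding a b zz_def
    by (rule idTop) (use y0 q0 in auto)
qed

definition "E j = (1+zz V)*Hl V t h j - (1+zz V)*Hl V t h (j+1) - zz V * Hl V t h (j-1)"

lemma E_neg: "j+1 < 0 \<Longrightarrow> E j = 0"
proof -
  assume "j+1<0"
  then have "E j = Kn V t h * ((1+zz V)*xb V powi j - (1+zz V)*xb V powi (j+1) - zz V * xb V powi (j-1))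
     - Kn V t h * V^(t+1) * ((1+zz V)*xa V powi j - (1+zz V)*xa V powi (j+1) - zz V * xa V powi (j-1))"
    by (simp add: E_def Hl_def algebra_simps)
  also have "\<dots> = 0" using gen[OF xnz(1) root] gen[OF xnz(2) root] by simp
  finally show ?thesis .
qed

lemma E_pos: "j \<ge> 1 \<Longrightarrow> E j = 0"
proof -
  assume "j \<ge> 1"
  then have "E j = Kp V t h * ((1+zz V)*xa V powi j - (1+zz V)*xa V powi (j+1) - zz V * xa V powi (j-1))
     - Kp V t h * V^(h+2) * ((1+zz V)*xb V powi j - (1+zz V)*xb V powi (j+1) - zz V * xb V powi (j-1))"
    by (simp add: E_def Hl_def algebra_simps)
  also have "\<dots> = 0" using gen[OF xnz(1) root] gen[OF xnz(2) root] by simp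
  finally show ?thesis .
qed


lemma EE_diff: "- int t \<le> j \<Longrightarrow> j < int h \<Longrightarrow>
   EE j = (if j = 0 then 1 else 0) - (if j+1 = 0 then 1 else 0)"
proof -
  assume a: "- int t \<le> j" "j < int h"
  consider "j+1 < 0" | "j = -1" | "j = 0" | "j \<ge> 1" by linarith
  then show ?thesis
  proof cases
    case 1 then show ?thesis using E_neg[OF 1] unfolding E_def EE_def by simp
  next
    case 2 then show ?thesis using E_m1 by simp
  next
    case 3 then show ?thesis using E_0 by simp
  next
    case 4 then show ?thesis using E_pos[OF 4] unfolding E_def EE_def by simp
  qed
qed

lemma sys_aux: "- int t \<le> j \<Longrightarrow> j \<le> int h \<Longrightarrow>
  Hl V t h j = (if j = 0 then 1 else 0) + zz V * Hl V t h (j-1) + zz V * (\<Sum>c\<in>{j+1..int h}. Hl V t h c)"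
proof (induction "nat (int h - j)" arbitrary: j)
  case 0
  then have j: "j = int h" by simp
  show ?case
  proof (cases h)
    case 0 then show ?thesis using top0 j by simp
  next
    case (Suc k)
    then have "j - 1 = int k" using j by simp
    then show ?thesis using top1[OF Suc] j Suc by simp
  qed
next
  case (Suc n)
  let ?H = "Hl V t h" and ?z = "zz V"
  have jh: "j < int h" using Suc.hyps(2) by simp
  have IH: "?H (j+1) = (if j+1 = 0 then 1 else 0) + ?z * ?H j + ?z * (\<Sum>c\<in>{j+2..int h}. ?H c)"
    using Suc.hyps(1)[of "j+1"] Suc.hyps(2) Suc.prems jh by (simp add: add.assoc)
  have split: "{j+1..int h} = insert (j+1) {j+2..int h}" using jh by auto
  have S: "(\<Sum>c\<in>{j+1..int h}. ?H c) = ?H (j+1) + (\<Sum>c\<in>{j+2..int h}. ?H c)"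
    unfolding split by simp
  have E: "EE j = (if j = 0 then 1 else 0) - (if j+1 = 0 then 1 else 0)"
    using EE_diff Suc.prems jh by simp
  show ?case unfolding S using IH E unfolding EE_def by (simp add: algebra_simps)
qed

end



abbreviation "bdp \<equiv> bounded_deutsch_paths"
definition CC :: "nat \<Rightarrow> nat \<Rightarrow> int \<Rightarrow> int set" where
  "CC t h j = {c\<in>{- int t..int h}. deutsch_step (j - c)}"

lemma bdp_0: "bdp t h j 0 = (if j = 0 then {[]} else {})"
  by (auto simp: bounded_deutsch_paths_def)

lemma bdp_out: "\<not> (- int t \<le> j \<and> j \<le> int h) \<Longrightarrow> bdp t h j n = {}"
proof -
  assume a: "\<not> (- int t \<le> j \<and> j \<le> int h)"
  { fix ss assume "ss \<in> bdp t h j n"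
    then have "length ss = n" "sum_list ss = j"
      "- int t \<le> sum_list (take n ss)" "sum_list (take n ss) \<le> int h"
      unfolding bounded_deutsch_paths_def by auto
    then have False using a by simp }
  then show ?thesis by blast
qed

lemma bdp_Suc: "- int t \<le> j \<Longrightarrow> j \<le> int h \<Longrightarrow>
  bdp t h j (Suc n) = (\<Union>c\<in>CC t h j. (\<lambda>ss. ss @ [j - c]) ` bdp t h c n)"
proof (intro equalityI subsetI)
  fix xs assume r: "- int t \<le> j" "j \<le> int h" and xs: "xs \<in> bdp t h j (Suc n)"
  then have len: "length xs = Suc n" and st: "\<forall>s\<in>set xs. deutsch_step s"
    and bd: "\<forall>k\<le>Suc n. - int t \<le> sum_list (take k xs) \<and> sum_list (take k xs) \<le> int h"
    and sm: "sum_list xs = j"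
    unfolding bounded_deutsch_paths_def by auto
  define ss where "ss = butlast xs"
  define c where "c = sum_list ss"
  have ne: "xs \<noteq> []" using len by auto
  have xe: "xs = ss @ [last xs]" using ne by (simp add: ss_def)
  have lss: "length ss = n" using len by (simp add: ss_def)
  have lx: "last xs = j - c" using sm xe c_def by (metis add_diff_cancel_left' sum_list_append sum_list_simps(1,2) add_0_right)
  have tk: "take k xs = take k ss" if "k \<le> n" for k
    using that lss xe by (metis take_append diff_is_0_eq take_0 append_Nil2)
  have cr: "- int t \<le> c" "c \<le> int h" using bd[rule_format, of n] tk[of n] lss c_def by auto
  have "deutsch_step (last xs)" using st ne by simp
  then have cc: "c \<in> CC t h j" using cr lx by (simp add: CC_def)
  have "ss \<in> bdp t h c n"
    unfolding bounded_deutsch_paths_def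
  proof (intro CollectI conjI allI impI ballI)
    show "length ss = n" by (rule lss)
    show "deutsch_step s" if "s \<in> set ss" for s using that st xe by (metis in_set_butlastD ss_def)
    show "- int t \<le> sum_list (take k ss)" if "k \<le> n" for k using that bd[rule_format, of k] tk[OF that] by simp
    show "sum_list (take k ss) \<le> int h" if "k \<le> n" for k using that bd[rule_format, of k] tk[OF that] by simp
    show "sum_list ss = c" by (simp add: c_def)
  qed
  then have "ss @ [j - c] \<in> (\<lambda>ss. ss @ [j - c]) ` bdp t h c n" by (rule imageI)
  then have "ss @ [j - c] \<in> (\<Union>c\<in>CC t h j. (\<lambda>ss. ss @ [j - c]) ` bdp t h c n)"
    using cc by (rule UN_I[rotated])
  moreover have "xs = ss @ [j - c]" using xe lx by simp
  ultimately show "xs \<in> (\<Union>c\<in>CC t h j. (\<lambda>ss. ss @ [j - c]) ` bdp t h c n)" by simp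
next
  fix xs assume r: "- int t \<le> j" "j \<le> int h"
    and "xs \<in> (\<Union>c\<in>CC t h j. (\<lambda>ss. ss @ [j - c]) ` bdp t h c n)"
  then obtain c ss where cc: "c \<in> CC t h j" and ss: "ss \<in> bdp t h c n" and xe: "xs = ss @ [j - c]"
    by blast
  from ss have len: "length ss = n" and st: "\<forall>s\<in>set ss. deutsch_step s"
    and bd: "\<forall>k\<le>n. - int t \<le> sum_list (take k ss) \<and> sum_list (take k ss) \<le> int h"
    and sm: "sum_list ss = c"
    unfolding bounded_deutsch_paths_def by auto
  have tk: "take k xs = take k ss" if "k \<le> n" for k
    using that len xe by simp
  show "xs \<in> bdp t h j (Suc n)"
    unfolding bounded_deutsch_paths_def
  proof (intro CollectI conjI allI impI ballI)
    show "length xs = Suc n" using len xe by simp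
    show "deutsch_step s" if "s \<in> set xs" for s using that st xe cc by (auto simp: CC_def)
    show "- int t \<le> sum_list (take k xs)" if "k \<le> Suc n" for k
    proof (cases "k \<le> n")
      case True then show ?thesis using bd tk by simp
    next
      case False then have "k = Suc n" using that by simp
      then show ?thesis using xe len sm r by simp
    qed
    show "sum_list (take k xs) \<le> int h" if "k \<le> Suc n" for k
    proof (cases "k \<le> n")
      case True then show ?thesis using bd tk by simp
    next
      case False then have "k = Suc n" using that by simp
      then show ?thesis using xe len sm r by simp
    qed
    show "sum_list xs = j" using xe sm by simp
  qed
qed

lemma CC_finite: "finite (CC t h j)" unfolding CC_def by (rule finite_subset[of _ "{- int t..int h}"]) auto
lemma CC_sub: "CC t h j \<subseteq> {- int t..int h}" by (auto simp: CC_def)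

lemma bdp_finite: "finite (bdp t h j n)"
proof (induction n arbitrary: j)
  case 0 then show ?case by (simp add: bdp_0)
next
  case (Suc n)
  show ?case
  proof (cases "- int t \<le> j \<and> j \<le> int h")
    case True then show ?thesis using Suc CC_finite by (simp add: bdp_Suc)
  next
    case False then show ?thesis by (simp add: bdp_out)
  qed
qed

lemma card_bdp_Suc: "- int t \<le> j \<Longrightarrow> j \<le> int h \<Longrightarrow>
  card (bdp t h j (Suc n)) = (\<Sum>c\<in>CC t h j. card (bdp t h c n))"
proof -
  assume r: "- int t \<le> j" "j \<le> int h"
  have "card (bdp t h j (Suc n)) = (\<Sum>c\<in>CC t h j. card ((\<lambda>ss. ss @ [j - c]) ` bdp t h c n))"
    unfolding bdp_Suc[OF r]
  proof (rule card_UN_disjoint)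
    show "finite (CC t h j)" by (rule CC_finite)
    show "\<forall>c\<in>CC t h j. finite ((\<lambda>ss. ss @ [j - c]) ` bdp t h c n)" using bdp_finite by blast
    show "\<forall>c\<in>CC t h j. \<forall>d\<in>CC t h j. c \<noteq> d \<longrightarrow>
      (\<lambda>ss. ss @ [j - c]) ` bdp t h c n \<inter> (\<lambda>ss. ss @ [j - d]) ` bdp t h d n = {}"
      by auto
  qed
  also have "\<dots> = (\<Sum>c\<in>CC t h j. card (bdp t h c n))"
    by (intro sum.cong refl card_image) (auto simp: inj_on_def)
  finally show ?thesis .
qed

definition GG :: "nat \<Rightarrow> nat \<Rightarrow> int \<Rightarrow> real fps" where
  "GG t h j = Abs_fps (\<lambda>n. real (card (bdp t h j n)))"

definition sysP :: "nat \<Rightarrow> nat \<Rightarrow> (int \<Rightarrow> real fps) \<Rightarrow> bool" where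
  "sysP t h H \<longleftrightarrow> (\<forall>j. - int t \<le> j \<and> j \<le> int h \<longrightarrow>
      H j = (if j = 0 then 1 else 0) + fps_X * (\<Sum>c\<in>CC t h j. H c))"

lemma GG_sys: "sysP t h (GG t h)"
  unfolding sysP_def
proof (intro allI impI)
  fix j assume r: "- int t \<le> j \<and> j \<le> int h"
  show "GG t h j = (if j = 0 then 1 else 0) + fps_X * (\<Sum>c\<in>CC t h j. GG t h c)"
  proof (rule fps_ext)
    fix n show "fps_nth (GG t h j) n = fps_nth ((if j = 0 then 1 else 0) + fps_X * (\<Sum>c\<in>CC t h j. GG t h c)) n"
    proof (cases n)
      case 0 then show ?thesis by (simp add: GG_def bdp_0)
    next
      case (Suc m)
      then show ?thesis using r by (simp add: GG_def card_bdp_Suc fps_sum_nth)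
    qed
  qed
qed

lemma sys_unique:
  assumes "sysP t h H1" "sysP t h H2" "- int t \<le> j" "j \<le> int h"
  shows "H1 j = H2 j"
proof -
  have "\<forall>j. - int t \<le> j \<and> j \<le> int h \<longrightarrow> fps_nth (H1 j) n = fps_nth (H2 j) n" for n
  proof (induction n)
    case 0 then show ?case using assms(1,2) unfolding sysP_def by auto
  next
    case (Suc n)
    show ?case
    proof (intro allI impI)
      fix j assume r: "- int t \<le> j \<and> j \<le> int h"
      have "fps_nth (H1 j) (Suc n) = (\<Sum>c\<in>CC t h j. fps_nth (H1 c) n)"
        using assms(1) r unfolding sysP_def by (simp add: fps_sum_nth)
      also have "\<dots> = (\<Sum>c\<in>CC t h j. fps_nth (H2 c) n)"
        using Suc CC_sub by (intro sum.cong refl) force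
      also have "\<dots> = fps_nth (H2 j) (Suc n)"
        using assms(2) r unfolding sysP_def by (simp add: fps_sum_nth)
      finally show "fps_nth (H1 j) (Suc n) = fps_nth (H2 j) (Suc n)" .
    qed
  qed
  then show ?thesis using assms(3,4) by (intro fps_ext) blast
qed

lemma CC_sum:
  fixes H :: "int \<Rightarrow> 'a::comm_monoid_add"
  assumes "- int t \<le> j" "j \<le> int h"
  shows "(\<Sum>c\<in>CC t h j. H c) = (if - int t \<le> j - 1 then H (j-1) else 0) + (\<Sum>c\<in>{j+1..int h}. H c)"
proof -
  have e: "CC t h j = {c. c = j - 1 \<and> - int t \<le> j - 1} \<union> {j+1..int h}"
    using assms by (auto simp: CC_def deutsch_step_def)
  have "(\<Sum>c\<in>CC t h j. H c) = (\<Sum>c\<in>{c. c = j - 1 \<and> - int t \<le> j - 1}. H c) + (\<Sum>c\<in>{j+1..int h}. H c)"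
    unfolding e by (rule sum.union_disjoint) auto
  moreover have "{c. c = j - 1 \<and> - int t \<le> j - 1} = (if - int t \<le> j - 1 then {j-1} else {})" by auto
  ultimately show ?thesis by simp
qed




lemma pure_neg:
  fixes V A B X q y m W :: "'a::field"
  assumes "y \<noteq> 0" "m \<noteq> 0" "W \<noteq> 0"
  shows "V*X*q/(y^2*m*W) * (A*(1-B)) = (A/y^2)*(1-B)*V*X*q/(m*W)"
  using assms by (simp add: field_simps)

lemma pure_pos:
  fixes a c Z q y m W Y :: "'a::field"
  assumes "y \<noteq> 0" "m \<noteq> 0" "W \<noteq> 0" "Y \<noteq> 0"
  shows "Z*q/(y^2*m*W) * ((a - a*c)/Y) = a*Z*(1-c)*q/(m*(Y*y^2)*W)"
  using assms by (simp add: field_simps)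

context vctx begin

lemma Hl_neg:
  assumes "- int t \<le> j" "j < 0"
  shows "Hl V t h j = (1+V) powi (-j-2) * (1 - V^nat(j+int t+1)) * V * (1-V^(h+1)) * (1+V+V^2)
                      / ((1-V)*(1-V^(h+t+3)))"
proof -
  define A where "A = (1+V) powi (-j)"
  define B where "B = V^nat(j+int t+1)"
  have xb: "xb V powi j = A" unfolding A_def xb_def
    by (simp add: power_int_divide_distrib power_int_minus_divide)
  have xa: "xa V powi j = V powi j * A" unfolding A_def xa_def
    by (simp add: power_int_divide_distrib power_int_minus_divide)
  have "V^(t+1) * V powi j = V powi (int (t+1) + j)"
    using V0 by (simp add: power_int_add)
  also have "int (t+1) + j = int (nat (j + int t + 1))" using assms by simp
  finally have vb: "V^(t+1) * V powi j = B" unfolding B_def power_int_of_nat .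
  have "xb V powi j - V^(t+1) * xa V powi j = A*(1-B)"
    unfolding xb xa vb[symmetric] by (simp add: algebra_simps)
  then have e1: "Hl V t h j = Kn V t h * (A*(1-B))" using assms by (simp add: Hl_def)
  have e2: "(1+V) powi (-j-2) = A/(1+V)^2" unfolding A_def using y0
    by (simp add: power_int_diff)
  show ?thesis unfolding e1 e2 B_def[symmetric] Kn_def
    by (rule pure_neg) (use y0 m0 w0 in auto)
qed

lemma Hl_pos:
  assumes "0 \<le> j" "j \<le> int h"
  shows "Hl V t h j = V^nat j * (1-V^(t+2)) * (1-V^nat(2-j+int h)) * (1+V+V^2)
                      / ((1-V)*(1+V)^nat(j+2)*(1-V^(h+t+3)))"
proof -
  obtain n where n: "j = int n" using assms by (metis nonneg_eq_int)
  have nh: "n \<le> h" using assms n by simp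
  have e3: "nat (2-j+int h) = h+2-n" "nat j = n" "nat (j+2) = n+2" using n nh by auto
  have vv: "V^(h+2) = V^n * V^(h+2-n)" using nh by (simp flip: power_add)
  have "xa V powi j - V^(h+2) * xb V powi j = (V^n - V^n*V^(h+2-n))/(1+V)^n"
    unfolding n power_int_of_nat xa_def xb_def vv by (simp add: power_divide diff_divide_distrib)
  then have e1: "Hl V t h j = Kp V t h * ((V^n - V^n*V^(h+2-n))/(1+V)^n)" using assms by (simp add: Hl_def)
  show ?thesis unfolding e1 e3 Kp_def power_add[of "1+V" n 2]
    by (rule pure_pos) (use y0 m0 w0 in auto)
qed

end

lemma fps_to_fls_sum: "fps_to_fls (sum f S) = (\<Sum>x\<in>S. fps_to_fls (f x))"
  by (induction S rule: infinite_finite_induct) auto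

lemma fps_to_fls_power_int:
  fixes a :: "'a::field fps"
  assumes "fps_nth a 0 \<noteq> 0"
  shows "fps_to_fls (fps_power_int a k) = fps_to_fls a powi k"
proof (cases "k \<ge> 0")
  case True then show ?thesis by (simp add: fps_power_int_def power_int_def fps_to_fls_power)
next
  case False
  have "subdegree a = 0" using assms by simp
  then show ?thesis using False
    by (simp add: fps_power_int_def power_int_def fps_to_fls_power fls_inverse_fps_to_fls)
qed




theorem theorem5:
  fixes t h :: nat and i :: int and v Phi :: "real fps"
  assumes "- int t \<le> i" and "i \<le> int h"
    and "Phi = Abs_fps (\<lambda>n. real (card (bounded_deutsch_paths t h i n)))"
    and "fps_nth v 0 = 0"
    and "fps_X = v / (1 + v + v ^ 2)"
  shows "(i < 0 \<longrightarrow> Phi =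
            fps_power_int (1 + v) (- i - 2) * (1 - v ^ nat (i + int t + 1)) * v
              * (1 - v ^ (h + 1)) * (1 + v + v ^ 2)
            / ((1 - v) * (1 - v ^ (h + t + 3))))
       \<and> (0 \<le> i \<longrightarrow> Phi =
            v ^ nat i * (1 - v ^ (t + 2)) * (1 - v ^ nat (2 - i + int h)) * (1 + v + v ^ 2)
            / ((1 - v) * (1 + v) ^ nat (i + 2) * (1 - v ^ (h + t + 3))))"
proof -
  note v0 = assms(4)
  define V where "V = fps_to_fls v"
  have c_y: "fps_nth (1+v) 0 \<noteq> 0" and c_m: "fps_nth (1-v) 0 \<noteq> 0"
    and c_q: "fps_nth (1+v+v^2) 0 \<noteq> 0" and c_w: "fps_nth (1-v^(h+t+3)) 0 \<noteq> 0"
    using v0 by (simp_all add: fps_nth_power_0 power_0_left)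
  have vnz: "v \<noteq> 0" using assms(5) by (metis div_0 fps_X_neq_zero)
  have ctx: "vctx V t h"
  proof
    show "V \<noteq> 0" using vnz by (simp add: V_def)
    show "1 + V \<noteq> 0" using c_y unfolding V_def
      by (metis fps_one_to_fls fps_to_fls_eq_0_iff fps_to_fls_plus fps_zero_nth)
    show "1 - V \<noteq> 0" using c_m unfolding V_def
      by (metis fps_one_to_fls fps_to_fls_eq_0_iff fps_to_fls_minus fps_zero_nth)
    show "1 + V + V^2 \<noteq> 0" using c_q unfolding V_def
      by (metis fps_one_to_fls fps_to_fls_eq_0_iff fps_to_fls_plus fps_to_fls_power fps_zero_nth)
    show "1 - V^(h+t+3) \<noteq> 0" using c_w unfolding V_def
      by (metis fps_one_to_fls fps_to_fls_eq_0_iff fps_to_fls_minus fps_to_fls_power fps_zero_nth)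
  qed
  interpret vctx V t h by (rule ctx)
  have zX: "fls_X = zz V"
  proof -
    have "fls_X = fps_to_fls (v / (1+v+v^2))" using assms(5) by (metis fps_X_to_fls)
    also have "\<dots> = fps_to_fls v / fps_to_fls (1+v+v^2)"
      by (rule fls_divide_fps_to_fls[symmetric]) (use c_q in simp)
    finally show ?thesis by (simp add: V_def zz_def fps_to_fls_power)
  qed
  define Hf where "Hf j = (if j < 0 then
            fps_power_int (1 + v) (- j - 2) * (1 - v ^ nat (j + int t + 1)) * v
              * (1 - v ^ (h + 1)) * (1 + v + v ^ 2)
            / ((1 - v) * (1 - v ^ (h + t + 3)))
       else v ^ nat j * (1 - v ^ (t + 2)) * (1 - v ^ nat (2 - j + int h)) * (1 + v + v ^ 2)
            / ((1 - v) * (1 + v) ^ nat (j + 2) * (1 - v ^ (h + t + 3))))" for j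
  have conv: "fps_to_fls (Hf j) = Hl V t h j" if r: "- int t \<le> j" "j \<le> int h" for j
  proof (cases "j < 0")
    case True
    have "fps_to_fls (Hf j) = fps_to_fls (fps_power_int (1 + v) (- j - 2) * (1 - v ^ nat (j + int t + 1)) * v
              * (1 - v ^ (h + 1)) * (1 + v + v ^ 2)) / fps_to_fls ((1 - v) * (1 - v ^ (h + t + 3)))"
      unfolding Hf_def using True
      by (simp, intro fls_divide_fps_to_fls[symmetric]) (use c_m c_w in simp)
    also have "\<dots> = Hl V t h j"
      using Hl_neg[OF r(1) True] c_y
      by (simp add: fls_times_fps_to_fls fps_to_fls_power fps_to_fls_power_int V_def)
    finally show ?thesis .
  next
    case False
    have "fps_to_fls (Hf j) = fps_to_fls (v ^ nat j * (1 - v ^ (t + 2)) * (1 - v ^ nat (2 - j + int h)) * (1 + v + v ^ 2))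
         / fps_to_fls ((1 - v) * (1 + v) ^ nat (j + 2) * (1 - v ^ (h + t + 3)))"
      unfolding Hf_def using False
      by (simp, intro fls_divide_fps_to_fls[symmetric]) (use c_m c_w c_y in \<open>simp add: fps_nth_power_0\<close>)
    also have "\<dots> = Hl V t h j"
      using Hl_pos[OF _ r(2)] False
      by (simp add: fls_times_fps_to_fls fps_to_fls_power V_def)
    finally show ?thesis .
  qed
  have sysH: "sysP t h Hf"
    unfolding sysP_def
  proof (intro allI impI)
    fix j assume r: "- int t \<le> j \<and> j \<le> int h"
    have s1: "(\<Sum>c\<in>CC t h j. Hl V t h c) = Hl V t h (j-1) + (\<Sum>c\<in>{j+1..int h}. Hl V t h c)"
    proof -
      have "\<not> (- int t \<le> j - 1) \<Longrightarrow> Hl V t h (j-1) = 0"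
      proof -
        assume "\<not> (- int t \<le> j - 1)"
        then have "j - 1 = - int t - 1" using r by simp
        then show ?thesis using Hbot by simp
      qed
      then show ?thesis using CC_sum[of t j h "Hl V t h"] r
        by (cases "- int t \<le> j - 1") auto
    qed
    have "fps_to_fls (Hf j) = Hl V t h j" using conv r by simp
    also have "\<dots> = (if j = 0 then 1 else 0) + zz V * (\<Sum>c\<in>CC t h j. Hl V t h c)"
    proof -
      have sa: "Hl V t h j = (if j = 0 then 1 else 0) + zz V * Hl V t h (j-1) + zz V * (\<Sum>c\<in>{j+1..int h}. Hl V t h c)"
        by (rule sys_aux) (use r in auto)
      show ?thesis unfolding s1 sa by (simp add: algebra_simps)
    qed
    also have "\<dots> = fps_to_fls ((if j = 0 then 1 else 0) + fps_X * (\<Sum>c\<in>CC t h j. Hf c))"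
    proof -
      have "(\<Sum>c\<in>CC t h j. Hl V t h c) = (\<Sum>c\<in>CC t h j. fps_to_fls (Hf c))"
        using conv CC_sub by (intro sum.cong refl) force
      then show ?thesis by (simp add: fls_times_fps_to_fls fps_to_fls_sum zX)
    qed
    finally show "Hf j = (if j = 0 then 1 else 0) + fps_X * (\<Sum>c\<in>CC t h j. Hf c)"
      by (simp only: fps_to_fls_eq_iff)
  qed
  have "Phi = GG t h i" by (simp add: assms(3) GG_def)
  also have "\<dots> = Hf i" using sys_unique[OF GG_sys sysH assms(1,2)] .
  finally show ?thesis by (simp add: Hf_def)
qed

end
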